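(* Let $G$ and $H$ be isoclinic finite groups. Then $A_G(t)=A_H\left(\frac{|G|}{|H|}t\right)$ and $B_G(t)=B_H\left(\frac{|G|}{|H|}t\right)$.
   Context: For a finite group $G$ and $n\ge 0$, $G$ acts on $G^n$ by simultaneous conjugation. Let $G^{(n)}\subseteq G^n$ be the set of $n$-tuples of pairwise commuting elements. Let $\alpha_{G,n}$ (resp. $\beta_{G,n}$) be the number of $G$-orbits on $G^n$ (resp. on $G^{(n)}$), and set $A_G(t)=\sum_{n\ge0}\alpha_{G,n}t^n$, $B_G(t)=\sum_{n\ge0}\beta_{G,n}t^n$; these are rational functions of $t$. Two finite groups $G$ and $H$ are isoclinic if there exist isomorphisms $\theta:G/Z(G)\to H/Z(H)$ and $\phi:G'\to H'$ (where $G'$ is the commutator subgroup) such that $\phi([g_1,g_2])=[h_1,h_2]$ whenever $\theta(g_iZ(G))=h_iZ(H)$ for $i=1,2$; i.e. $\phi\circ a_G=a_H\circ(\theta\times\theta)$ where $a_G(g_1Z(G),g_2Z(G))=[g_1,g_2]$. *)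

theory Defs
  imports "HOL-Algebra.Algebra" "HOL-Computational_Algebra.Formal_Power_Series"
begin

definition grp_center :: "('a, 'b) monoid_scheme \<Rightarrow> 'a set" where
  "grp_center G = {z \<in> carrier G. \<forall>g \<in> carrier G. z \<otimes>\<^bsub>G\<^esub> g = g \<otimes>\<^bsub>G\<^esub> z}"

text \<open>Commutator, with the same convention as the library's derived subgroup.\<close>
definition grp_comm :: "('a, 'b) monoid_scheme \<Rightarrow> 'a \<Rightarrow> 'a \<Rightarrow> 'a" where
  "grp_comm G x y = x \<otimes>\<^bsub>G\<^esub> y \<otimes>\<^bsub>G\<^esub> inv\<^bsub>G\<^esub> x \<otimes>\<^bsub>G\<^esub> inv\<^bsub>G\<^esub> y"

definition comm_subgroup :: "('a, 'b) monoid_scheme \<Rightarrow> ('a, 'b) monoid_scheme" where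
  "comm_subgroup G = G\<lparr>carrier := derived G (carrier G)\<rparr>"

definition isoclinic :: "('a, 'c) monoid_scheme \<Rightarrow> ('b, 'd) monoid_scheme \<Rightarrow> bool" where
  "isoclinic G H \<longleftrightarrow>
     (\<exists>\<theta> \<phi>. \<theta> \<in> iso (G Mod grp_center G) (H Mod grp_center H)
          \<and> \<phi> \<in> iso (comm_subgroup G) (comm_subgroup H)
          \<and> (\<forall>g1 \<in> carrier G. \<forall>g2 \<in> carrier G. \<forall>h1 \<in> carrier H. \<forall>h2 \<in> carrier H.
               \<theta> (grp_center G #>\<^bsub>G\<^esub> g1) = grp_center H #>\<^bsub>H\<^esub> h1 \<longrightarrow>
               \<theta> (grp_center G #>\<^bsub>G\<^esub> g2) = grp_center H #>\<^bsub>H\<^esub> h2 \<longrightarrow>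
               \<phi> (grp_comm G g1 g2) = grp_comm H h1 h2))"

definition tuples :: "('a, 'b) monoid_scheme \<Rightarrow> nat \<Rightarrow> 'a list set" where
  "tuples G n = {xs. length xs = n \<and> set xs \<subseteq> carrier G}"

definition comm_tuples :: "('a, 'b) monoid_scheme \<Rightarrow> nat \<Rightarrow> 'a list set" where
  "comm_tuples G n = {xs \<in> tuples G n.
     \<forall>i < n. \<forall>j < n. xs ! i \<otimes>\<^bsub>G\<^esub> xs ! j = xs ! j \<otimes>\<^bsub>G\<^esub> xs ! i}"

definition conj_tuple :: "('a, 'b) monoid_scheme \<Rightarrow> 'a \<Rightarrow> 'a list \<Rightarrow> 'a list" where
  "conj_tuple G g xs = map (\<lambda>x. g \<otimes>\<^bsub>G\<^esub> x \<otimes>\<^bsub>G\<^esub> inv\<^bsub>G\<^esub> g) xs"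

definition conj_orbit :: "('a, 'b) monoid_scheme \<Rightarrow> 'a list \<Rightarrow> 'a list set" where
  "conj_orbit G xs = {conj_tuple G g xs | g. g \<in> carrier G}"

definition num_orbits :: "('a, 'b) monoid_scheme \<Rightarrow> 'a list set \<Rightarrow> nat" where
  "num_orbits G S = card (conj_orbit G ` S)"

definition alpha :: "('a, 'b) monoid_scheme \<Rightarrow> nat \<Rightarrow> nat" where
  "alpha G n = num_orbits G (tuples G n)"

definition beta :: "('a, 'b) monoid_scheme \<Rightarrow> nat \<Rightarrow> nat" where
  "beta G n = num_orbits G (comm_tuples G n)"

definition gf_A :: "('a, 'b) monoid_scheme \<Rightarrow> rat fps" where
  "gf_A G = Abs_fps (\<lambda>n. of_nat (alpha G n))"

definition gf_B :: "('a, 'b) monoid_scheme \<Rightarrow> rat fps" where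
  "gf_B G = Abs_fps (\<lambda>n. of_nat (beta G n))"

end

theory Submission
  imports Defs
begin

section \<open>Generic counting\<close>

lemma card_fibers_const:
  assumes "finite A" "finite B" "f ` A \<subseteq> B" "\<And>b. b \<in> B \<Longrightarrow> card {a\<in>A. f a = b} = k"
  shows "card A = k * card B"
proof -
  have "card A = (\<Sum>a\<in>A. 1)" by simp
  also have "\<dots> = (\<Sum>b\<in>B. \<Sum>a\<in>{a\<in>A. f a = b}. 1)"
    using sum.group[OF assms(1,2,3), of "\<lambda>_. 1::nat"] by simp
  also have "\<dots> = (\<Sum>b\<in>B. k)" using assms(4) by simp
  finally show ?thesis by simp
qed

lemma card_list_fiber:
  assumes "finite A" "\<And>b. b \<in> B \<Longrightarrow> card {a\<in>A. f a = b} = k"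
  shows "set ys \<subseteq> B \<Longrightarrow> card {xs. set xs \<subseteq> A \<and> map f xs = ys} = k ^ length ys"
proof (induction ys)
  case Nil
  have "{xs. set xs \<subseteq> A \<and> map f xs = []} = {[]}" by auto
  then show ?case by simp
next
  case (Cons y ys)
  have eq: "{xs. set xs \<subseteq> A \<and> map f xs = y # ys}
      = (\<lambda>(x, xs). x # xs) ` ({a\<in>A. f a = y} \<times> {xs. set xs \<subseteq> A \<and> map f xs = ys})"
    by (auto simp: Cons_eq_map_conv image_iff)
  have "card {xs. set xs \<subseteq> A \<and> map f xs = y # ys}
       = card ({a\<in>A. f a = y} \<times> {xs. set xs \<subseteq> A \<and> map f xs = ys})"
    unfolding eq by (rule card_image) (auto simp: inj_on_def)
  also have "\<dots> = k * k ^ length ys"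
    using Cons by (simp add: card_cartesian_product assms(2))
  finally show ?case by simp
qed

lemma card_lists_pred_lift:
  assumes "finite A" "finite B" "f ` A \<subseteq> B" "\<And>b. b \<in> B \<Longrightarrow> card {a\<in>A. f a = b} = k"
  shows "card {xs. length xs = m \<and> set xs \<subseteq> A \<and> P (map f xs)}
       = k ^ m * card {ys. length ys = m \<and> set ys \<subseteq> B \<and> P ys}"
proof (rule card_fibers_const[where f = "map f"])
  show "finite {xs. length xs = m \<and> set xs \<subseteq> A \<and> P (map f xs)}"
    using finite_lists_length_eq[OF assms(1), of m] by (rule rev_finite_subset) auto
  show "finite {ys. length ys = m \<and> set ys \<subseteq> B \<and> P ys}"
    using finite_lists_length_eq[OF assms(2), of m] by (rule rev_finite_subset) auto
  show "map f ` {xs. length xs = m \<and> set xs \<subseteq> A \<and> P (map f xs)}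
      \<subseteq> {ys. length ys = m \<and> set ys \<subseteq> B \<and> P ys}"
    using assms(3) by fastforce
  fix ys assume ys: "ys \<in> {ys. length ys = m \<and> set ys \<subseteq> B \<and> P ys}"
  have "{xs \<in> {xs. length xs = m \<and> set xs \<subseteq> A \<and> P (map f xs)}. map f xs = ys}
      = {xs. set xs \<subseteq> A \<and> map f xs = ys}"
    using ys by auto
  then show "card {xs \<in> {xs. length xs = m \<and> set xs \<subseteq> A \<and> P (map f xs)}. map f xs = ys} = k ^ m"
    using card_list_fiber[OF assms(1,4), where ys=ys] ys by auto
qed

section \<open>Conjugation on tuples\<close>

lemma conj_tuple_one:
  assumes "group G" "set xs \<subseteq> carrier G"
  shows "conj_tuple G \<one>\<^bsub>G\<^esub> xs = xs"
proof -
  interpret group G by fact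
  show ?thesis using assms(2) unfolding conj_tuple_def by (induction xs) auto
qed

lemma conj_tuple_comp:
  assumes "group G" "set xs \<subseteq> carrier G" "g \<in> carrier G" "h \<in> carrier G"
  shows "conj_tuple G g (conj_tuple G h xs) = conj_tuple G (g \<otimes>\<^bsub>G\<^esub> h) xs"
proof -
  interpret group G by fact
  show ?thesis using assms(2-4) unfolding conj_tuple_def
    by (induction xs) (auto simp: m_assoc inv_mult_group)
qed

lemma conj_tuple_carrier:
  assumes "group G" "set xs \<subseteq> carrier G" "g \<in> carrier G"
  shows "set (conj_tuple G g xs) \<subseteq> carrier G" "length (conj_tuple G g xs) = length xs"
proof -
  interpret group G by fact
  show "set (conj_tuple G g xs) \<subseteq> carrier G" "length (conj_tuple G g xs) = length xs"
    using assms unfolding conj_tuple_def by auto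
qed

lemma conj_orbit_img: "conj_orbit G xs = (\<lambda>g. conj_tuple G g xs) ` carrier G"
  unfolding conj_orbit_def by auto

lemma conj_orbit_self:
  assumes "group G" "set xs \<subseteq> carrier G"
  shows "xs \<in> conj_orbit G xs"
proof -
  interpret group G by fact
  show ?thesis using conj_tuple_one[OF assms] unfolding conj_orbit_img
    by (metis image_eqI one_closed)
qed

lemma conj_orbit_eq:
  fixes G (structure)
  assumes "group G" "set xs \<subseteq> carrier G" "ys \<in> conj_orbit G xs"
  shows "conj_orbit G ys = conj_orbit G xs"
proof -
  interpret group G by fact
  obtain h where h: "h \<in> carrier G" "ys = conj_tuple G h xs"
    using assms(3) unfolding conj_orbit_img by auto
  show ?thesis
  proof
    show "conj_orbit G ys \<subseteq> conj_orbit G xs"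
      unfolding conj_orbit_img using h conj_tuple_comp[OF assms(1,2) _ h(1)] by auto
    show "conj_orbit G xs \<subseteq> conj_orbit G ys"
    proof
      fix zs assume "zs \<in> conj_orbit G xs"
      then obtain g where g: "g \<in> carrier G" "zs = conj_tuple G g xs"
        unfolding conj_orbit_img by auto
      have "conj_tuple G (g \<otimes> inv h) ys = conj_tuple G (g \<otimes> inv h \<otimes> h) xs"
        using h g conj_tuple_comp[OF assms(1,2), of "g \<otimes> inv h" h] by simp
      also have "\<dots> = zs" using g h by (simp add: m_assoc)
      finally show "zs \<in> conj_orbit G ys" unfolding conj_orbit_img
        using g h by (metis image_eqI inv_closed m_closed)
    qed
  qed
qed

lemma orbit_stabilizer:
  fixes G (structure)
  assumes "group G" "finite (carrier G)" "set xs \<subseteq> carrier G"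
  shows "order G = card {g \<in> carrier G. conj_tuple G g xs = xs} * card (conj_orbit G xs)"
proof -
  interpret group G by fact
  define St where "St = {g \<in> carrier G. conj_tuple G g xs = xs}"
  show ?thesis unfolding order_def St_def[symmetric]
  proof (rule card_fibers_const[where f = "\<lambda>g. conj_tuple G g xs"])
    show "finite (carrier G)" by fact
    show "finite (conj_orbit G xs)" unfolding conj_orbit_img using assms(2) by simp
    show "(\<lambda>g. conj_tuple G g xs) ` carrier G \<subseteq> conj_orbit G xs" unfolding conj_orbit_img by simp
    fix y assume "y \<in> conj_orbit G xs"
    then obtain g0 where g0: "g0 \<in> carrier G" "y = conj_tuple G g0 xs"
      unfolding conj_orbit_img by auto
    have "{g \<in> carrier G. conj_tuple G g xs = y} = (\<lambda>h. g0 \<otimes> h) ` St"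
    proof
      show "{g \<in> carrier G. conj_tuple G g xs = y} \<subseteq> (\<lambda>h. g0 \<otimes> h) ` St"
      proof
        fix g assume g: "g \<in> {g \<in> carrier G. conj_tuple G g xs = y}"
        have "conj_tuple G (inv g0 \<otimes> g) xs = conj_tuple G (inv g0) (conj_tuple G g xs)"
          using g g0 conj_tuple_comp[OF assms(1,3), of "inv g0" g] by simp
        also have "\<dots> = conj_tuple G (inv g0 \<otimes> g0) xs"
          using g g0 conj_tuple_comp[OF assms(1,3), of "inv g0" g0] by simp
        also have "\<dots> = xs" using g0 conj_tuple_one[OF assms(1,3)] by simp
        finally have "inv g0 \<otimes> g \<in> St" unfolding St_def using g g0 by simp
        moreover have "g = g0 \<otimes> (inv g0 \<otimes> g)" using g g0 by (simp add: m_assoc[symmetric])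
        ultimately show "g \<in> (\<lambda>h. g0 \<otimes> h) ` St" by blast
      qed
      show "(\<lambda>h. g0 \<otimes> h) ` St \<subseteq> {g \<in> carrier G. conj_tuple G g xs = y}"
        using g0 conj_tuple_comp[OF assms(1,3), of g0] unfolding St_def by (auto simp flip: conj_tuple_comp[OF assms(1,3)])
    qed
    moreover have "inj_on (\<lambda>h. g0 \<otimes> h) St" using g0 unfolding St_def inj_on_def by auto
    ultimately show "card {g \<in> carrier G. conj_tuple G g xs = y} = card St"
      by (simp add: card_image)
  qed
qed

lemma orbit_count:
  fixes G (structure)
  assumes "group G" "finite (carrier G)" "S \<subseteq> tuples G n"
    and stab: "\<And>g xs. g \<in> carrier G \<Longrightarrow> xs \<in> S \<Longrightarrow> conj_tuple G g xs \<in> S"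
  shows "num_orbits G S * order G
       = card {g # xs | g xs. g \<in> carrier G \<and> xs \<in> S \<and> conj_tuple G g xs = xs}"
proof -
  interpret group G by fact
  define St where "St xs = {g \<in> carrier G. conj_tuple G g xs = xs}" for xs
  define Orb where "Orb = conj_orbit G"
  have finS: "finite S"
    using finite_lists_length_eq[OF assms(2), of n] assms(3) unfolding tuples_def
    by (metis (no_types, lifting) Collect_cong rev_finite_subset)
  have Scar: "set xs \<subseteq> carrier G" if "xs \<in> S" for xs
    using assms(3) that unfolding tuples_def by auto
  have "{g # xs | g xs. g \<in> carrier G \<and> xs \<in> S \<and> conj_tuple G g xs = xs}
      = (\<lambda>(xs, g). g # xs) ` (SIGMA xs:S. St xs)"
    unfolding St_def by auto
  then have "card {g # xs | g xs. g \<in> carrier G \<and> xs \<in> S \<and> conj_tuple G g xs = xs}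
      = card (SIGMA xs:S. St xs)"
    by (metis (no_types, lifting) card_image inj_onI list.inject prod.collapse split_beta)
  also have "\<dots> = (\<Sum>xs\<in>S. card (St xs))"
    using finS assms(2) by (intro card_SigmaI) (auto simp: St_def)
  also have "\<dots> = (\<Sum>c\<in>Orb ` S. \<Sum>xs\<in>{xs\<in>S. Orb xs = c}. card (St xs))"
    using sum.group[OF finS finite_imageI[OF finS], where g=Orb and h="\<lambda>xs. card (St xs)"] by simp
  also have "\<dots> = (\<Sum>c\<in>Orb ` S. order G)"
  proof (rule sum.cong[OF refl])
    fix c assume "c \<in> Orb ` S"
    then obtain x0 where x0: "x0 \<in> S" "c = Orb x0" by auto
    have oS: "{xs\<in>S. Orb xs = c} = c"
    proof
      show "{xs\<in>S. Orb xs = c} \<subseteq> c" using conj_orbit_self[OF assms(1) Scar] unfolding Orb_def by auto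
      show "c \<subseteq> {xs\<in>S. Orb xs = c}"
      proof
        fix xs assume xs: "xs \<in> c"
        then obtain g where "g \<in> carrier G" "xs = conj_tuple G g x0"
          using x0 unfolding Orb_def conj_orbit_img by auto
        then have "xs \<in> S" using stab x0 by simp
        then show "xs \<in> {xs\<in>S. Orb xs = c}"
          using conj_orbit_eq[OF assms(1) Scar[OF x0(1)]] xs x0 unfolding Orb_def by auto
      qed
    qed
    have os: "order G = card (St xs) * card c" if "xs \<in> c" for xs
    proof -
      have "xs \<in> S" "Orb xs = c" using that oS by auto
      then show ?thesis using orbit_stabilizer[OF assms(1,2) Scar[of xs]] unfolding St_def Orb_def by simp
    qed
    have "c \<noteq> {}" using x0 conj_orbit_self[OF assms(1) Scar] unfolding Orb_def by auto
    moreover have "finite c" using x0 assms(2) unfolding Orb_def conj_orbit_img by simp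
    ultimately have cpos: "card c > 0" by (simp add: card_gt_0_iff)
    have "(\<Sum>xs\<in>{xs\<in>S. Orb xs = c}. card (St xs)) = (\<Sum>xs\<in>c. order G div card c)"
      unfolding oS using os cpos by (intro sum.cong) auto
    also have "\<dots> = card c * (order G div card c)" by simp
    also have "\<dots> = order G"
    proof -
      have "x0 \<in> c" using conj_orbit_self[OF assms(1) Scar[OF x0(1)]] x0 unfolding Orb_def by simp
      then show ?thesis using os[of x0] cpos by simp
    qed
    finally show "(\<Sum>xs\<in>{xs\<in>S. Orb xs = c}. card (St xs)) = order G" .
  qed
  also have "\<dots> = num_orbits G S * order G" unfolding num_orbits_def Orb_def by simp
  finally show ?thesis by simp
qed


section \<open>Fixed-point sets\<close>

definition PA :: "('x \<Rightarrow> 'x \<Rightarrow> bool) \<Rightarrow> 'x list \<Rightarrow> bool" where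
  "PA R ys = (\<forall>i<length ys. R (ys ! 0) (ys ! i))"

definition PB :: "('x \<Rightarrow> 'x \<Rightarrow> bool) \<Rightarrow> 'x list \<Rightarrow> bool" where
  "PB R ys = (\<forall>i<length ys. \<forall>j<length ys. R (ys ! i) (ys ! j))"

lemma PA_map: "PA (\<lambda>a b. R (f a) (f b)) ys = PA R (map f ys)"
proof -
  have "(\<forall>i<length ys. R (f (ys ! 0)) (f (ys ! i))) = (\<forall>i<length ys. R (map f ys ! 0) (map f ys ! i))"
  proof (intro iffI allI impI)
    fix i assume "\<forall>i<length ys. R (f (ys ! 0)) (f (ys ! i))" "i < length ys"
    then show "R (map f ys ! 0) (map f ys ! i)" by (metis gr_implies_not0 nth_map neq0_conv)
  next
    fix i assume "\<forall>i<length ys. R (map f ys ! 0) (map f ys ! i)" "i < length ys"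
    then show "R (f (ys ! 0)) (f (ys ! i))" by (metis gr_implies_not0 nth_map neq0_conv)
  qed
  then show ?thesis unfolding PA_def by simp
qed

lemma PB_map: "PB (\<lambda>a b. R (f a) (f b)) ys = PB R (map f ys)"
  unfolding PB_def by auto

lemma conj_fix_iff:
  fixes G (structure)
  assumes "group G" "g \<in> carrier G" "x \<in> carrier G"
  shows "(g \<otimes> x \<otimes> inv g = x) = (g \<otimes> x = x \<otimes> g)"
proof -
  interpret group G by fact
  show ?thesis using assms(2,3) by (metis inv_solve_right m_closed)
qed

lemma conj_tuple_fix_iff:
  fixes G (structure)
  assumes "group G" "g \<in> carrier G" "set xs \<subseteq> carrier G"
  shows "(conj_tuple G g xs = xs) = (\<forall>i<length xs. g \<otimes> xs ! i = xs ! i \<otimes> g)"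
proof -
  have "(conj_tuple G g xs = xs) = (\<forall>i<length xs. g \<otimes> xs ! i \<otimes> inv g = xs ! i)"
    unfolding conj_tuple_def by (simp add: list_eq_iff_nth_eq)
  also have "\<dots> = (\<forall>i<length xs. g \<otimes> xs ! i = xs ! i \<otimes> g)"
    using conj_fix_iff[OF assms(1,2)] assms(3) by (auto simp: nth_mem subset_iff)
  finally show ?thesis .
qed

lemma alpha_count:
  fixes G (structure)
  assumes "group G" "finite (carrier G)"
  shows "alpha G n * order G
     = card {ys. length ys = Suc n \<and> set ys \<subseteq> carrier G \<and> PA (\<lambda>x y. x \<otimes> y = y \<otimes> x) ys}"
proof -
  interpret group G by fact
  have "alpha G n * order G
     = card {g # xs | g xs. g \<in> carrier G \<and> xs \<in> tuples G n \<and> conj_tuple G g xs = xs}"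
    unfolding alpha_def
    by (rule orbit_count[OF assms, where n=n]) (auto simp: tuples_def conj_tuple_carrier[OF assms(1)])
  also have "{g # xs | g xs. g \<in> carrier G \<and> xs \<in> tuples G n \<and> conj_tuple G g xs = xs}
      = {ys. length ys = Suc n \<and> set ys \<subseteq> carrier G \<and> PA (\<lambda>x y. x \<otimes> y = y \<otimes> x) ys}"
  proof (rule Set.set_eqI, rule iffI)
    fix ys assume "ys \<in> {g # xs | g xs. g \<in> carrier G \<and> xs \<in> tuples G n \<and> conj_tuple G g xs = xs}"
    then obtain g xs where ys: "ys = g # xs" "g \<in> carrier G" "xs \<in> tuples G n" "conj_tuple G g xs = xs"
      by blast
    have xs: "length xs = n" "set xs \<subseteq> carrier G" using ys(3) unfolding tuples_def by auto
    have c: "\<forall>i<n. g \<otimes> xs ! i = xs ! i \<otimes> g"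
      using conj_tuple_fix_iff[OF assms(1) ys(2) xs(2)] ys(4) xs(1) by simp
    show "ys \<in> {ys. length ys = Suc n \<and> set ys \<subseteq> carrier G \<and> PA (\<lambda>x y. x \<otimes> y = y \<otimes> x) ys}"
      using ys xs c unfolding PA_def by (auto simp: less_Suc_eq_0_disj)
  next
    fix ys assume ys: "ys \<in> {ys. length ys = Suc n \<and> set ys \<subseteq> carrier G \<and> PA (\<lambda>x y. x \<otimes> y = y \<otimes> x) ys}"
    then obtain g xs where gx: "ys = g # xs" by (cases ys) auto
    have xs: "length xs = n" "set xs \<subseteq> carrier G" "g \<in> carrier G" using ys gx by auto
    have "\<forall>i<n. g \<otimes> xs ! i = xs ! i \<otimes> g"
      using ys gx unfolding PA_def by auto
    then have "conj_tuple G g xs = xs"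
      using conj_tuple_fix_iff[OF assms(1) xs(3) xs(2)] xs(1) by simp
    then show "ys \<in> {g # xs | g xs. g \<in> carrier G \<and> xs \<in> tuples G n \<and> conj_tuple G g xs = xs}"
      using gx xs unfolding tuples_def by auto
  qed
  finally show ?thesis .
qed

lemma conj_comm_pres:
  fixes G (structure)
  assumes "group G" "g \<in> carrier G" "a \<in> carrier G" "b \<in> carrier G" "a \<otimes> b = b \<otimes> a"
  shows "(g \<otimes> a \<otimes> inv g) \<otimes> (g \<otimes> b \<otimes> inv g) = (g \<otimes> b \<otimes> inv g) \<otimes> (g \<otimes> a \<otimes> inv g)"
proof -
  interpret group G by fact
  have c: "inv g \<otimes> (g \<otimes> x) = x" if "x \<in> carrier G" for x
    using that assms by (simp add: m_assoc[symmetric])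
  have "(g \<otimes> a \<otimes> inv g) \<otimes> (g \<otimes> b \<otimes> inv g) = g \<otimes> (a \<otimes> b) \<otimes> inv g"
    using assms(1-4) by (simp add: m_assoc c)
  moreover have "(g \<otimes> b \<otimes> inv g) \<otimes> (g \<otimes> a \<otimes> inv g) = g \<otimes> (b \<otimes> a) \<otimes> inv g"
    using assms(1-4) by (simp add: m_assoc c)
  ultimately show ?thesis by (metis assms(5))
qed

lemma beta_count:
  fixes G (structure)
  assumes "group G" "finite (carrier G)"
  shows "beta G n * order G
     = card {ys. length ys = Suc n \<and> set ys \<subseteq> carrier G \<and> PB (\<lambda>x y. x \<otimes> y = y \<otimes> x) ys}"
proof -
  interpret group G by fact
  have "beta G n * order G
     = card {g # xs | g xs. g \<in> carrier G \<and> xs \<in> comm_tuples G n \<and> conj_tuple G g xs = xs}"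
    unfolding beta_def
  proof (rule orbit_count[OF assms, where n=n])
    show "comm_tuples G n \<subseteq> tuples G n" unfolding comm_tuples_def by auto
    fix g xs assume g: "g \<in> carrier G" and xs: "xs \<in> comm_tuples G n"
    have xs': "length xs = n" "set xs \<subseteq> carrier G"
      using xs unfolding comm_tuples_def tuples_def by auto
    have "\<forall>i<n. \<forall>j<n. conj_tuple G g xs ! i \<otimes> conj_tuple G g xs ! j
        = conj_tuple G g xs ! j \<otimes> conj_tuple G g xs ! i"
    proof (intro allI impI)
      fix i j assume ij: "i < n" "j < n"
      then have "xs ! i \<in> carrier G" "xs ! j \<in> carrier G" using xs' nth_mem by blast+
      moreover have "xs ! i \<otimes> xs ! j = xs ! j \<otimes> xs ! i"
        using xs ij unfolding comm_tuples_def by auto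
      ultimately show "conj_tuple G g xs ! i \<otimes> conj_tuple G g xs ! j
        = conj_tuple G g xs ! j \<otimes> conj_tuple G g xs ! i"
        using ij xs' conj_comm_pres[OF assms(1) g] unfolding conj_tuple_def by simp
    qed
    then show "conj_tuple G g xs \<in> comm_tuples G n"
      unfolding comm_tuples_def tuples_def
      using conj_tuple_carrier[OF assms(1) xs'(2) g] xs' by simp
  qed
  also have "{g # xs | g xs. g \<in> carrier G \<and> xs \<in> comm_tuples G n \<and> conj_tuple G g xs = xs}
      = {ys. length ys = Suc n \<and> set ys \<subseteq> carrier G \<and> PB (\<lambda>x y. x \<otimes> y = y \<otimes> x) ys}"
  proof (rule Set.set_eqI, rule iffI)
    fix ys assume "ys \<in> {g # xs | g xs. g \<in> carrier G \<and> xs \<in> comm_tuples G n \<and> conj_tuple G g xs = xs}"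
    then obtain g xs where ys: "ys = g # xs" "g \<in> carrier G" "xs \<in> comm_tuples G n" "conj_tuple G g xs = xs"
      by blast
    have xs: "length xs = n" "set xs \<subseteq> carrier G"
      "\<forall>i<n. \<forall>j<n. xs ! i \<otimes> xs ! j = xs ! j \<otimes> xs ! i"
      using ys(3) unfolding comm_tuples_def tuples_def by auto
    have c: "\<forall>i<n. g \<otimes> xs ! i = xs ! i \<otimes> g"
      using conj_tuple_fix_iff[OF assms(1) ys(2) xs(2)] ys(4) xs(1) by simp
    show "ys \<in> {ys. length ys = Suc n \<and> set ys \<subseteq> carrier G \<and> PB (\<lambda>x y. x \<otimes> y = y \<otimes> x) ys}"
      using ys xs c unfolding PB_def by (auto simp: less_Suc_eq_0_disj)
  next
    fix ys assume ys: "ys \<in> {ys. length ys = Suc n \<and> set ys \<subseteq> carrier G \<and> PB (\<lambda>x y. x \<otimes> y = y \<otimes> x) ys}"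
    then obtain g xs where gx: "ys = g # xs" by (cases ys) auto
    have xs: "length xs = n" "set xs \<subseteq> carrier G" "g \<in> carrier G" using ys gx by auto
    have pb: "\<forall>i<Suc n. \<forall>j<Suc n. (g # xs) ! i \<otimes> (g # xs) ! j = (g # xs) ! j \<otimes> (g # xs) ! i"
      using ys gx unfolding PB_def by auto
    have "\<forall>i<n. g \<otimes> xs ! i = xs ! i \<otimes> g"
    proof (intro allI impI)
      fix i assume "i < n" then show "g \<otimes> xs ! i = xs ! i \<otimes> g" using pb[rule_format, of 0 "Suc i"] by simp
    qed
    then have "conj_tuple G g xs = xs"
      using conj_tuple_fix_iff[OF assms(1) xs(3) xs(2)] xs(1) by simp
    moreover have "\<forall>i<n. \<forall>j<n. xs ! i \<otimes> xs ! j = xs ! j \<otimes> xs ! i"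
    proof (intro allI impI)
      fix i j assume "i < n" "j < n"
      then show "xs ! i \<otimes> xs ! j = xs ! j \<otimes> xs ! i" using pb[rule_format, of "Suc i" "Suc j"] by simp
    qed
    ultimately show "ys \<in> {g # xs | g xs. g \<in> carrier G \<and> xs \<in> comm_tuples G n \<and> conj_tuple G g xs = xs}"
      using gx xs unfolding comm_tuples_def tuples_def by auto
  qed
  finally show ?thesis .
qed


section \<open>Centre and cosets\<close>

lemma center_subgroup:
  fixes G (structure)
  assumes "group G"
  shows "subgroup (grp_center G) G"
proof -
  interpret group G by fact
  show ?thesis
  proof (rule subgroupI)
    show "grp_center G \<subseteq> carrier G" unfolding grp_center_def by auto
    have "\<one> \<in> grp_center G" unfolding grp_center_def by simp
    then show "grp_center G \<noteq> {}" by blast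
  next
    fix a assume a: "a \<in> grp_center G"
    have "\<forall>g\<in>carrier G. inv a \<otimes> g = g \<otimes> inv a"
    proof
      fix g assume g: "g \<in> carrier G"
      have ac: "a \<in> carrier G" "a \<otimes> g = g \<otimes> a" using a g unfolding grp_center_def mem_Collect_eq by blast+
      have "inv a \<otimes> g = inv a \<otimes> (g \<otimes> a) \<otimes> inv a" using ac(1) g by (simp add: m_assoc)
      also have "\<dots> = inv a \<otimes> (a \<otimes> g) \<otimes> inv a" by (simp only: ac(2))
      also have "\<dots> = g \<otimes> inv a" using ac(1) g by (simp add: m_assoc[symmetric])
      finally show "inv a \<otimes> g = g \<otimes> inv a" .
    qed
    moreover have "inv a \<in> carrier G" using a unfolding grp_center_def mem_Collect_eq by (blast intro: inv_closed)
    ultimately show "inv a \<in> grp_center G" unfolding grp_center_def mem_Collect_eq by blast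
  next
    fix a b assume "a \<in> grp_center G" "b \<in> grp_center G"
    then have ab: "a \<in> carrier G" "b \<in> carrier G" "\<forall>g\<in>carrier G. a \<otimes> g = g \<otimes> a"
      "\<forall>g\<in>carrier G. b \<otimes> g = g \<otimes> b" unfolding grp_center_def mem_Collect_eq by blast+
    have "\<forall>g\<in>carrier G. a \<otimes> b \<otimes> g = g \<otimes> (a \<otimes> b)"
    proof
      fix g assume g: "g \<in> carrier G"
      have "a \<otimes> b \<otimes> g = a \<otimes> (b \<otimes> g)" using ab(1,2) g by (simp add: m_assoc)
      also have "\<dots> = a \<otimes> (g \<otimes> b)" using ab(4) g by (metis (no_types))
      also have "\<dots> = (a \<otimes> g) \<otimes> b" using ab(1,2) g by (simp add: m_assoc)
      also have "\<dots> = (g \<otimes> a) \<otimes> b" using ab(3) g by (metis (no_types))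
      also have "\<dots> = g \<otimes> (a \<otimes> b)" using ab(1,2) g by (simp add: m_assoc)
      finally show "a \<otimes> b \<otimes> g = g \<otimes> (a \<otimes> b)" .
    qed
    moreover have "a \<otimes> b \<in> carrier G" using ab(1,2) by simp
    ultimately show "a \<otimes> b \<in> grp_center G" unfolding grp_center_def mem_Collect_eq by blast
  qed
qed

lemma rcoset_fiber:
  fixes G (structure)
  assumes "group G" "subgroup Z G" "g0 \<in> carrier G"
  shows "{g \<in> carrier G. Z #> g = Z #> g0} = Z #> g0"
proof -
  interpret group G by fact
  show ?thesis
  proof
    show "{g \<in> carrier G. Z #> g = Z #> g0} \<subseteq> Z #> g0"
      using rcos_self[OF _ assms(2)] by auto
    show "Z #> g0 \<subseteq> {g \<in> carrier G. Z #> g = Z #> g0}"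
      using repr_independence[OF _ assms(3,2)] subgroup.elemrcos_carrier[OF assms(2,1,3)] by auto
  qed
qed

lemma card_rcoset:
  fixes G (structure)
  assumes "group G" "subgroup Z G" "g0 \<in> carrier G"
  shows "card (Z #> g0) = card Z"
proof -
  interpret group G by fact
  show ?thesis using card_rcosets_equal[OF rcosetsI[OF subgroup.subset[OF assms(2)] assms(3)]]
      subgroup.subset[OF assms(2)] by simp
qed

lemma comm_one_iff:
  fixes G (structure)
  assumes "group G" "x \<in> carrier G" "y \<in> carrier G"
  shows "(grp_comm G x y = \<one>) = (x \<otimes> y = y \<otimes> x)"
proof -
  interpret group G by fact
  have e: "grp_comm G x y = (x \<otimes> y) \<otimes> inv (y \<otimes> x)"
    unfolding grp_comm_def using assms(2,3) by (simp add: m_assoc inv_mult_group)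
  have "(grp_comm G x y = \<one>) = (\<one> = (x \<otimes> y) \<otimes> inv (y \<otimes> x))"
    unfolding e by (rule eq_commute)
  also have "\<dots> = (x \<otimes> y = \<one> \<otimes> (y \<otimes> x))"
    using assms(2,3) by (intro inv_solve_right) simp_all
  also have "\<one> \<otimes> (y \<otimes> x) = y \<otimes> x" using assms(2,3) by simp
  finally show ?thesis .
qed

definition Rb :: "('b, 'd) monoid_scheme \<Rightarrow> 'b set \<Rightarrow> 'b set \<Rightarrow> bool" where
  "Rb H c1 c2 = (\<exists>h1\<in>carrier H. \<exists>h2\<in>carrier H. c1 = grp_center H #>\<^bsub>H\<^esub> h1
      \<and> c2 = grp_center H #>\<^bsub>H\<^esub> h2 \<and> h1 \<otimes>\<^bsub>H\<^esub> h2 = h2 \<otimes>\<^bsub>H\<^esub> h1)"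

lemma Rb_iff:
  fixes H (structure)
  assumes "group H" "h1 \<in> carrier H" "h2 \<in> carrier H"
  shows "Rb H (grp_center H #> h1) (grp_center H #> h2) = (h1 \<otimes> h2 = h2 \<otimes> h1)"
proof
  interpret group H by fact
  have sg: "subgroup (grp_center H) H" by (rule center_subgroup[OF assms(1)])
  assume "Rb H (grp_center H #> h1) (grp_center H #> h2)"
  then obtain k1 k2 where k: "k1 \<in> carrier H" "k2 \<in> carrier H"
    "grp_center H #> h1 = grp_center H #> k1" "grp_center H #> h2 = grp_center H #> k2"
    "k1 \<otimes> k2 = k2 \<otimes> k1" unfolding Rb_def by blast
  have "h1 \<in> grp_center H #> k1" using rcos_self[OF assms(2) sg] k(3) by simp
  then obtain z1 where z1: "z1 \<in> grp_center H" "h1 = z1 \<otimes> k1" unfolding r_coset_def by auto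
  have "h2 \<in> grp_center H #> k2" using rcos_self[OF assms(3) sg] k(4) by simp
  then obtain z2 where z2: "z2 \<in> grp_center H" "h2 = z2 \<otimes> k2" unfolding r_coset_def by auto
  have zc: "z1 \<in> carrier H" "z2 \<in> carrier H" "\<forall>g\<in>carrier H. z1 \<otimes> g = g \<otimes> z1"
      "\<forall>g\<in>carrier H. z2 \<otimes> g = g \<otimes> z2"
    using z1 z2 unfolding grp_center_def mem_Collect_eq by blast+
  have c1: "k1 \<otimes> z2 = z2 \<otimes> k1" using zc(4) k(1) by (metis (no_types))
  have c2: "z1 \<otimes> z2 = z2 \<otimes> z1" using zc(3) zc(2) by (metis (no_types))
  have c3: "z1 \<otimes> k2 = k2 \<otimes> z1" using zc(3) k(2) by (metis (no_types))
  note zc' = zc(1,2)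
  have "h1 \<otimes> h2 = z1 \<otimes> (k1 \<otimes> z2) \<otimes> k2" using z1(2) z2(2) zc' k(1,2) by (simp add: m_assoc)
  also have "\<dots> = z1 \<otimes> (z2 \<otimes> k1) \<otimes> k2" by (simp only: c1)
  also have "\<dots> = (z1 \<otimes> z2) \<otimes> (k1 \<otimes> k2)" using zc' k(1,2) by (simp add: m_assoc)
  also have "\<dots> = (z2 \<otimes> z1) \<otimes> (k2 \<otimes> k1)" by (simp only: c2 k(5))
  also have "\<dots> = z2 \<otimes> (z1 \<otimes> k2) \<otimes> k1" using zc' k(1,2) by (simp add: m_assoc)
  also have "\<dots> = z2 \<otimes> (k2 \<otimes> z1) \<otimes> k1" by (simp only: c3)
  also have "\<dots> = h2 \<otimes> h1" using z1(2) z2(2) zc' k(1,2) by (simp add: m_assoc)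
  finally show "h1 \<otimes> h2 = h2 \<otimes> h1" .
next
  assume "h1 \<otimes> h2 = h2 \<otimes> h1"
  then show "Rb H (grp_center H #> h1) (grp_center H #> h2)" using assms unfolding Rb_def by auto
qed


section \<open>Consequences of isoclinism\<close>

lemma iso_data:
  fixes G :: "('a, 'c) monoid_scheme" and H :: "('b, 'd) monoid_scheme"
  assumes "group G" "finite (carrier G)" "group H" "finite (carrier H)" "isoclinic G H"
  obtains F where "\<And>g. g \<in> carrier G \<Longrightarrow> F g \<in> rcosets\<^bsub>H\<^esub> grp_center H"
    "\<And>c. c \<in> rcosets\<^bsub>H\<^esub> grp_center H \<Longrightarrow> card {g \<in> carrier G. F g = c} = card (grp_center G)"
    "\<And>g1 g2. g1 \<in> carrier G \<Longrightarrow> g2 \<in> carrier G \<Longrightarrow>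
        (g1 \<otimes>\<^bsub>G\<^esub> g2 = g2 \<otimes>\<^bsub>G\<^esub> g1) = Rb H (F g1) (F g2)"
    "card (rcosets\<^bsub>G\<^esub> grp_center G) = card (rcosets\<^bsub>H\<^esub> grp_center H)"
proof -
  interpret G: group G by fact
  interpret H: group H by fact
  define ZG where "ZG = grp_center G"
  define ZH where "ZH = grp_center H"
  have sgG: "subgroup ZG G" unfolding ZG_def by (rule center_subgroup[OF assms(1)])
  have sgH: "subgroup ZH H" unfolding ZH_def by (rule center_subgroup[OF assms(3)])
  obtain \<theta> \<phi> where th: "\<theta> \<in> iso (G Mod ZG) (H Mod ZH)"
    and ph: "\<phi> \<in> iso (comm_subgroup G) (comm_subgroup H)"
    and cond: "\<And>g1 g2 h1 h2. g1 \<in> carrier G \<Longrightarrow> g2 \<in> carrier G \<Longrightarrow> h1 \<in> carrier H \<Longrightarrow> h2 \<in> carrier H \<Longrightarrow>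
               \<theta> (ZG #>\<^bsub>G\<^esub> g1) = ZH #>\<^bsub>H\<^esub> h1 \<Longrightarrow>
               \<theta> (ZG #>\<^bsub>G\<^esub> g2) = ZH #>\<^bsub>H\<^esub> h2 \<Longrightarrow>
               \<phi> (grp_comm G g1 g2) = grp_comm H h1 h2"
    using assms(5) unfolding isoclinic_def ZG_def ZH_def by blast
  have bij: "bij_betw \<theta> (rcosets\<^bsub>G\<^esub> ZG) (rcosets\<^bsub>H\<^esub> ZH)"
    using th unfolding iso_def by (simp add: FactGroup_def)
  define F where "F g = \<theta> (ZG #>\<^bsub>G\<^esub> g)" for g
  have ZGsub: "ZG \<subseteq> carrier G" using sgG subgroup.subset by blast
  have ZHsub: "ZH \<subseteq> carrier H" using sgH subgroup.subset by blast
  have Fin: "F g \<in> rcosets\<^bsub>H\<^esub> ZH" if "g \<in> carrier G" for g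
    unfolding F_def using bij G.rcosetsI[OF ZGsub that] by (meson bij_betwE)
  have Fobt: "\<exists>h\<in>carrier H. F g = ZH #>\<^bsub>H\<^esub> h" if "g \<in> carrier G" for g
    using Fin[OF that] unfolding RCOSETS_def by blast
  show thesis
  proof (rule that[of F])
    fix g assume "g \<in> carrier G" then show "F g \<in> rcosets\<^bsub>H\<^esub> grp_center H"
      using Fin ZH_def by simp
  next
    fix c assume c: "c \<in> rcosets\<^bsub>H\<^esub> grp_center H"
    then obtain C where C: "C \<in> rcosets\<^bsub>G\<^esub> ZG" "\<theta> C = c"
      using bij c unfolding ZH_def bij_betw_def by (metis imageE)
    then obtain g0 where g0: "g0 \<in> carrier G" "C = ZG #>\<^bsub>G\<^esub> g0"
      unfolding RCOSETS_def by blast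
    have "{g \<in> carrier G. F g = c} = {g \<in> carrier G. ZG #>\<^bsub>G\<^esub> g = ZG #>\<^bsub>G\<^esub> g0}"
    proof (intro Set.set_eqI iffI)
      fix g assume g: "g \<in> {g \<in> carrier G. F g = c}"
      then have "\<theta> (ZG #>\<^bsub>G\<^esub> g) = \<theta> (ZG #>\<^bsub>G\<^esub> g0)" using C g0 unfolding F_def by simp
      moreover have "ZG #>\<^bsub>G\<^esub> g \<in> rcosets\<^bsub>G\<^esub> ZG" using g G.rcosetsI[OF ZGsub] by simp
      ultimately show "g \<in> {g \<in> carrier G. ZG #>\<^bsub>G\<^esub> g = ZG #>\<^bsub>G\<^esub> g0}"
        using g C(1) g0 bij unfolding bij_betw_def inj_on_def by auto
    next
      fix g assume "g \<in> {g \<in> carrier G. ZG #>\<^bsub>G\<^esub> g = ZG #>\<^bsub>G\<^esub> g0}"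
      then show "g \<in> {g \<in> carrier G. F g = c}" using C g0 unfolding F_def by simp
    qed
    also have "\<dots> = ZG #>\<^bsub>G\<^esub> g0" by (rule rcoset_fiber[OF assms(1) sgG g0(1)])
    finally show "card {g \<in> carrier G. F g = c} = card (grp_center G)"
      using card_rcoset[OF assms(1) sgG g0(1)] ZG_def by simp
  next
    fix g1 g2 assume g: "g1 \<in> carrier G" "g2 \<in> carrier G"
    obtain h1 where h1: "h1 \<in> carrier H" "F g1 = ZH #>\<^bsub>H\<^esub> h1" using Fobt[OF g(1)] by blast
    obtain h2 where h2: "h2 \<in> carrier H" "F g2 = ZH #>\<^bsub>H\<^esub> h2" using Fobt[OF g(2)] by blast
    have eq: "\<phi> (grp_comm G g1 g2) = grp_comm H h1 h2"
      using cond[OF g h1(1) h2(1)] h1(2) h2(2) unfolding F_def by simp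
    define D where "D = derived G (carrier G)"
    have sgD: "subgroup D G" unfolding D_def by (rule G.derived_is_subgroup) simp
    have sgDH: "subgroup (derived H (carrier H)) H" by (rule H.derived_is_subgroup) simp
    have grpD: "group (comm_subgroup G)"
      unfolding comm_subgroup_def D_def[symmetric] by (rule subgroup.subgroup_is_group[OF sgD assms(1)])
    have grpDH: "group (comm_subgroup H)"
      unfolding comm_subgroup_def by (rule subgroup.subgroup_is_group[OF sgDH assms(3)])
    have one: "\<phi> \<one>\<^bsub>G\<^esub> = \<one>\<^bsub>H\<^esub>"
      using hom_one[of \<phi> "comm_subgroup G" "comm_subgroup H"] ph grpD grpDH
      unfolding iso_def by (simp add: comm_subgroup_def)
    have inj: "inj_on \<phi> D"
      using ph unfolding iso_def bij_betw_def by (simp add: comm_subgroup_def D_def)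
    have cD: "grp_comm G g1 g2 \<in> D"
      unfolding D_def derived_def grp_comm_def
      by (rule generate.incl) (use g in blast)
    have oneD: "\<one>\<^bsub>G\<^esub> \<in> D" using subgroup.one_closed[OF sgD] .
    have "(g1 \<otimes>\<^bsub>G\<^esub> g2 = g2 \<otimes>\<^bsub>G\<^esub> g1) = (grp_comm G g1 g2 = \<one>\<^bsub>G\<^esub>)"
      using comm_one_iff[OF assms(1) g] by simp
    also have "\<dots> = (\<phi> (grp_comm G g1 g2) = \<one>\<^bsub>H\<^esub>)"
      using inj cD oneD one unfolding inj_on_def by metis
    also have "\<dots> = (grp_comm H h1 h2 = \<one>\<^bsub>H\<^esub>)" using eq by simp
    also have "\<dots> = (h1 \<otimes>\<^bsub>H\<^esub> h2 = h2 \<otimes>\<^bsub>H\<^esub> h1)" using comm_one_iff[OF assms(3) h1(1) h2(1)] by simp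
    also have "\<dots> = Rb H (F g1) (F g2)"
      using Rb_iff[OF assms(3) h1(1) h2(1)] h1(2) h2(2) unfolding ZH_def by simp
    finally show "(g1 \<otimes>\<^bsub>G\<^esub> g2 = g2 \<otimes>\<^bsub>G\<^esub> g1) = Rb H (F g1) (F g2)" .
  next
    show "card (rcosets\<^bsub>G\<^esub> grp_center G) = card (rcosets\<^bsub>H\<^esub> grp_center H)"
      using bij_betw_same_card[OF bij] unfolding ZG_def ZH_def .
  qed
qed


section \<open>Transfer of counts\<close>

lemma PA_cong:
  assumes "\<And>x y. x \<in> set ys \<Longrightarrow> y \<in> set ys \<Longrightarrow> R x y = R' x y"
  shows "PA R ys = PA R' ys"
proof -
  have "R (ys ! 0) (ys ! i) = R' (ys ! 0) (ys ! i)" if "i < length ys" for i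
  proof -
    have "0 < length ys" using that by linarith
    then have "ys ! 0 \<in> set ys" "ys ! i \<in> set ys" using that nth_mem by blast+
    then show ?thesis using assms by blast
  qed
  then show ?thesis unfolding PA_def by auto
qed

lemma PB_cong:
  assumes "\<And>x y. x \<in> set ys \<Longrightarrow> y \<in> set ys \<Longrightarrow> R x y = R' x y"
  shows "PB R ys = PB R' ys"
  unfolding PB_def using assms nth_mem by blast

lemma count_transfer:
  fixes K (structure)
  assumes "finite (carrier K)" "finite B" "\<And>g. g \<in> carrier K \<Longrightarrow> F g \<in> B"
    "\<And>c. c \<in> B \<Longrightarrow> card {g \<in> carrier K. F g = c} = k"
    "\<And>g1 g2. g1 \<in> carrier K \<Longrightarrow> g2 \<in> carrier K \<Longrightarrow> (g1 \<otimes> g2 = g2 \<otimes> g1) = R (F g1) (F g2)"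
  shows "card {ys. length ys = m \<and> set ys \<subseteq> carrier K \<and> PA (\<lambda>x y. x \<otimes> y = y \<otimes> x) ys}
      = k ^ m * card {ys. length ys = m \<and> set ys \<subseteq> B \<and> PA R ys}"
    and "card {ys. length ys = m \<and> set ys \<subseteq> carrier K \<and> PB (\<lambda>x y. x \<otimes> y = y \<otimes> x) ys}
      = k ^ m * card {ys. length ys = m \<and> set ys \<subseteq> B \<and> PB R ys}"
proof -
  have img: "F ` carrier K \<subseteq> B" using assms(3) by blast
  have "{ys. length ys = m \<and> set ys \<subseteq> carrier K \<and> PA (\<lambda>x y. x \<otimes> y = y \<otimes> x) ys}
      = {ys. length ys = m \<and> set ys \<subseteq> carrier K \<and> PA R (map F ys)}"
  proof (intro Set.set_eqI)
    fix ys
    show "(ys \<in> {ys. length ys = m \<and> set ys \<subseteq> carrier K \<and> PA (\<lambda>x y. x \<otimes> y = y \<otimes> x) ys})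
      = (ys \<in> {ys. length ys = m \<and> set ys \<subseteq> carrier K \<and> PA R (map F ys)})"
      using PA_cong[of ys "\<lambda>x y. x \<otimes> y = y \<otimes> x" "\<lambda>a b. R (F a) (F b)"] PA_map[of R F ys] assms(5)
      by blast
  qed
  then show "card {ys. length ys = m \<and> set ys \<subseteq> carrier K \<and> PA (\<lambda>x y. x \<otimes> y = y \<otimes> x) ys}
      = k ^ m * card {ys. length ys = m \<and> set ys \<subseteq> B \<and> PA R ys}"
    using card_lists_pred_lift[OF assms(1,2) img assms(4), of m "PA R"] by simp
  have "{ys. length ys = m \<and> set ys \<subseteq> carrier K \<and> PB (\<lambda>x y. x \<otimes> y = y \<otimes> x) ys}
      = {ys. length ys = m \<and> set ys \<subseteq> carrier K \<and> PB R (map F ys)}"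
  proof (intro Set.set_eqI)
    fix ys
    show "(ys \<in> {ys. length ys = m \<and> set ys \<subseteq> carrier K \<and> PB (\<lambda>x y. x \<otimes> y = y \<otimes> x) ys})
      = (ys \<in> {ys. length ys = m \<and> set ys \<subseteq> carrier K \<and> PB R (map F ys)})"
      using PB_cong[of ys "\<lambda>x y. x \<otimes> y = y \<otimes> x" "\<lambda>a b. R (F a) (F b)"] PB_map[of R F ys] assms(5)
      by blast
  qed
  then show "card {ys. length ys = m \<and> set ys \<subseteq> carrier K \<and> PB (\<lambda>x y. x \<otimes> y = y \<otimes> x) ys}
      = k ^ m * card {ys. length ys = m \<and> set ys \<subseteq> B \<and> PB R ys}"
    using card_lists_pred_lift[OF assms(1,2) img assms(4), of m "PB R"] by simp
qed

lemma ratio_arith: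
  fixes a b r zg zh C :: nat
  assumes "a * (r * zg) = zg ^ Suc n * C" "b * (r * zh) = zh ^ Suc n * C"
    "r > 0" "zg > 0" "zh > 0"
  shows "(of_nat a :: rat) = (of_nat (r * zg) / of_nat (r * zh)) ^ n * of_nat b"
proof -
  have "zg * (a * r) = zg * (zg ^ n * C)" using assms(1) by (simp add: ac_simps)
  then have "a * r = zg ^ n * C" using assms(4) by simp
  then have ea: "(of_nat a :: rat) = of_nat zg ^ n * of_nat C / of_nat r"
    using assms(3) by (simp add: field_simps) (metis of_nat_mult of_nat_power)
  have "zh * (b * r) = zh * (zh ^ n * C)" using assms(2) by (simp add: ac_simps)
  then have "b * r = zh ^ n * C" using assms(5) by simp
  then have eb: "(of_nat b :: rat) = of_nat zh ^ n * of_nat C / of_nat r"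
    using assms(3) by (simp add: field_simps) (metis of_nat_mult of_nat_power)
  have "(of_nat (r * zg) / of_nat (r * zh) :: rat) = of_nat zg / of_nat zh"
    using assms(3) by simp
  then show ?thesis unfolding ea eb using assms(3-5)
    by (simp add: power_divide field_simps)
qed


lemma finite_rcosets:
  fixes G (structure)
  assumes "finite (carrier G)"
  shows "finite (rcosets Z)"
  unfolding RCOSETS_def using assms by simp

lemma center_card_pos:
  fixes G (structure)
  assumes "group G" "finite (carrier G)"
  shows "card (grp_center G) > 0"
proof -
  interpret group G by fact
  have "\<one> \<in> grp_center G" unfolding grp_center_def by simp
  moreover have "finite (grp_center G)"
    using assms(2) unfolding grp_center_def by simp
  ultimately show ?thesis by (simp add: card_gt_0_iff) blast
qed

lemma counts_main:
  fixes G :: "('a, 'c) monoid_scheme" and H :: "('b, 'd) monoid_scheme"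
  assumes "group G" "finite (carrier G)" "group H" "finite (carrier H)" "isoclinic G H"
  shows "(of_nat (alpha G n) :: rat) = (of_nat (order G) / of_nat (order H)) ^ n * of_nat (alpha H n)
     \<and> (of_nat (beta G n) :: rat) = (of_nat (order G) / of_nat (order H)) ^ n * of_nat (beta H n)"
proof -
  interpret G: group G by fact
  interpret H: group H by fact
  obtain F where F1: "\<And>g. g \<in> carrier G \<Longrightarrow> F g \<in> rcosets\<^bsub>H\<^esub> grp_center H"
    and F2: "\<And>c. c \<in> rcosets\<^bsub>H\<^esub> grp_center H \<Longrightarrow> card {g \<in> carrier G. F g = c} = card (grp_center G)"
    and F3: "\<And>g1 g2. g1 \<in> carrier G \<Longrightarrow> g2 \<in> carrier G \<Longrightarrow>
        (g1 \<otimes>\<^bsub>G\<^esub> g2 = g2 \<otimes>\<^bsub>G\<^esub> g1) = Rb H (F g1) (F g2)"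
    and F4: "card (rcosets\<^bsub>G\<^esub> grp_center G) = card (rcosets\<^bsub>H\<^esub> grp_center H)"
    using iso_data[OF assms] by blast
  define ZH where "ZH = grp_center H"
  define B where "B = rcosets\<^bsub>H\<^esub> ZH"
  have sgG: "subgroup (grp_center G) G" by (rule center_subgroup[OF assms(1)])
  have sgH: "subgroup ZH H" unfolding ZH_def by (rule center_subgroup[OF assms(3)])
  have ZHsub: "ZH \<subseteq> carrier H" using sgH subgroup.subset by blast
  have finB: "finite B" unfolding B_def by (rule finite_rcosets[OF assms(4)])
  have H1: "ZH #>\<^bsub>H\<^esub> h \<in> B" if "h \<in> carrier H" for h
    unfolding B_def using H.rcosetsI[OF ZHsub that] .
  have H2: "card {h \<in> carrier H. ZH #>\<^bsub>H\<^esub> h = c} = card ZH" if "c \<in> B" for c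
  proof -
    have "c \<in> (\<Union>a\<in>carrier H. {ZH #>\<^bsub>H\<^esub> a})" using that unfolding B_def RCOSETS_def .
    then obtain h0 where h0: "h0 \<in> carrier H" "c = ZH #>\<^bsub>H\<^esub> h0" by (elim UN_E singletonE)
    show ?thesis unfolding h0(2) rcoset_fiber[OF assms(3) sgH h0(1)] by (rule card_rcoset[OF assms(3) sgH h0(1)])
  qed
  have H3: "(h1 \<otimes>\<^bsub>H\<^esub> h2 = h2 \<otimes>\<^bsub>H\<^esub> h1) = Rb H (ZH #>\<^bsub>H\<^esub> h1) (ZH #>\<^bsub>H\<^esub> h2)"
    if "h1 \<in> carrier H" "h2 \<in> carrier H" for h1 h2
    using Rb_iff[OF assms(3) that] unfolding ZH_def by simp
  note TG = count_transfer[OF assms(2) finB, of F "card (grp_center G)" "Rb H",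
      OF F1[folded ZH_def, folded B_def] F2[folded ZH_def, folded B_def] F3]
  note TH = count_transfer[OF assms(4) finB, of "\<lambda>h. ZH #>\<^bsub>H\<^esub> h" "card ZH" "Rb H", OF H1 H2 H3]
  define r where "r = card B"
  define zg where "zg = card (grp_center G)"
  define zh where "zh = card ZH"
  have oG: "order G = r * zg"
    using G.lagrange_finite[OF assms(2) sgG] F4 unfolding r_def zg_def B_def ZH_def by simp
  have oH: "order H = r * zh"
    using H.lagrange_finite[OF assms(4) sgH] unfolding r_def zh_def B_def by simp
  have zgp: "zg > 0" unfolding zg_def by (rule center_card_pos[OF assms(1,2)])
  have zhp: "zh > 0" unfolding zh_def ZH_def by (rule center_card_pos[OF assms(3,4)])
  have "order H > 0" using assms(4) H.one_closed unfolding order_def by (simp add: card_gt_0_iff) blast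
  then have rp: "r > 0" using oH by simp
  have a: "(of_nat (alpha G n) :: rat) = (of_nat (order G) / of_nat (order H)) ^ n * of_nat (alpha H n)"
    unfolding oG oH
  proof (rule ratio_arith[OF _ _ rp zgp zhp])
    show "alpha G n * (r * zg) = zg ^ Suc n * card {ys. length ys = Suc n \<and> set ys \<subseteq> B \<and> PA (Rb H) ys}"
      using alpha_count[OF assms(1,2), of n] TG(1)[of "Suc n"] oG unfolding zg_def by simp
    show "alpha H n * (r * zh) = zh ^ Suc n * card {ys. length ys = Suc n \<and> set ys \<subseteq> B \<and> PA (Rb H) ys}"
      using alpha_count[OF assms(3,4), of n] TH(1)[of "Suc n"] oH unfolding zh_def by simp
  qed
  have b: "(of_nat (beta G n) :: rat) = (of_nat (order G) / of_nat (order H)) ^ n * of_nat (beta H n)"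
    unfolding oG oH
  proof (rule ratio_arith[OF _ _ rp zgp zhp])
    show "beta G n * (r * zg) = zg ^ Suc n * card {ys. length ys = Suc n \<and> set ys \<subseteq> B \<and> PB (Rb H) ys}"
      using beta_count[OF assms(1,2), of n] TG(2)[of "Suc n"] oG unfolding zg_def by simp
    show "beta H n * (r * zh) = zh ^ Suc n * card {ys. length ys = Suc n \<and> set ys \<subseteq> B \<and> PB (Rb H) ys}"
      using beta_count[OF assms(3,4), of n] TH(2)[of "Suc n"] oH unfolding zh_def by simp
  qed
  show ?thesis using a b by simp
qed

theorem theorem4p3:
  fixes G :: "('a, 'c) monoid_scheme" and H :: "('b, 'd) monoid_scheme"
  assumes "group G" and "finite (carrier G)"
    and "group H" and "finite (carrier H)"
    and "isoclinic G H"
  shows "gf_A G = gf_A H oo (fps_const (of_nat (order G) / of_nat (order H)) * fps_X)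
       \<and> gf_B G = gf_B H oo (fps_const (of_nat (order G) / of_nat (order H)) * fps_X)"
  using counts_main[OF assms]
  by (simp add: fps_compose_linear gf_A_def gf_B_def fps_eq_iff)

end
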